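(* The outer length billiard map $T$ and its square $T^2$ are positive twist maps of the phase cylinder in the coordinates $(\alpha,R)$. That is, if $(\alpha',R')=T(\alpha,R)$ and $(\alpha'',R'')=T^2(\alpha,R)$, then $\partial\alpha'/\partial R>0$ and $\partial\alpha''/\partial R>0$ everywhere.
   Context: Let $\gamma$ be an oval: a smooth closed curve in $\mathbb R^2$ with everywhere positive curvature, oriented counterclockwise. Its support function is a smooth $2\pi$-periodic $p$ with $p+p''>0$. $L(\alpha)=\{x\cos\alpha+y\sin\alpha=p(\alpha)\}$ is the tangent line with outer normal $(\cos\alpha,\sin\alpha)$, touching $\gamma$ at $\gamma(\alpha)=p(\alpha)(\cos\alpha,\sin\alpha)+p'(\alpha)(-\sin\alpha,\cos\alpha)$. Every exterior point is $M=L(\alpha_1)\cap L(\alpha_2)$ with $\alpha_1<\alpha_2<\alpha_1+\pi$. Set $\omega=\alpha_2-\alpha_1$, $l_j=|M-\gamma(\alpha_j)|$ and $R_j=l_j\tan(\omega/2)$. Here $R_j$ is the radius of the circle tangent to $L(\alpha_j)$ at $\gamma(\alpha_j)$, tangent to the other line, and lying on the side of $L(\alpha_j)$ not containing $\gamma$. The outer length billiard map is $T(M)=L(\alpha_2)\cap L(\alpha_3)$, where $\alpha_3\in(\alpha_2,\alpha_2+\pi)$ is defined as follows. Let $K$ be the circle tangent to $L(\alpha_2)$ at $\gamma(\alpha_2)$, on the side of $L(\alpha_2)$ not containing $\gamma$, and tangent to $L(\alpha_1)$. Then $L(\alpha_3)$ is the common tangent line of $\gamma$ and $K$, other than $L(\alpha_1)$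 and $L(\alpha_2)$, leaving $\gamma$ and $K$ on the same side. Equivalently, the radius $R_1$ of $T(M)$ equals the radius $R_2$ of $M$. Phase coordinates: $M\mapsto(\alpha,R):=(\alpha_1,R_1)$. *)

theory Defs
  imports "HOL-Analysis.Analysis"
begin

definition is_oval_support :: "(real \<Rightarrow> real) \<Rightarrow> bool" where
  "is_oval_support p \<longleftrightarrow>
     (\<forall>n x. ((deriv ^^ n) p) differentiable (at x)) \<and>
     (\<forall>x. p (x + 2 * pi) = p x) \<and>
     (\<forall>x. p x + deriv (deriv p) x > 0)"

definition tline :: "(real \<Rightarrow> real) \<Rightarrow> real \<Rightarrow> (real \<times> real) set" where
  "tline p a = {(x, y). x * cos a + y * sin a = p a}"

text \<open>Tangency point gamma(a).\<close>
definition gam :: "(real \<Rightarrow> real) \<Rightarrow> real \<Rightarrow> real \<times> real" where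
  "gam p a = (p a * cos a - deriv p a * sin a, p a * sin a + deriv p a * cos a)"

definition extpt :: "(real \<Rightarrow> real) \<Rightarrow> real \<Rightarrow> real \<Rightarrow> real \<times> real" where
  "extpt p a1 a2 = (THE M. M \<in> tline p a1 \<and> M \<in> tline p a2)"

definition rad1 :: "(real \<Rightarrow> real) \<Rightarrow> real \<Rightarrow> real \<Rightarrow> real" where
  "rad1 p a1 a2 = dist (extpt p a1 a2) (gam p a1) * tan ((a2 - a1) / 2)"

definition rad2 :: "(real \<Rightarrow> real) \<Rightarrow> real \<Rightarrow> real \<Rightarrow> real" where
  "rad2 p a1 a2 = dist (extpt p a1 a2) (gam p a2) * tan ((a2 - a1) / 2)"

definition second_angle :: "(real \<Rightarrow> real) \<Rightarrow> real \<Rightarrow> real \<Rightarrow> real" where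
  "second_angle p a R = (THE a2. a < a2 \<and> a2 < a + pi \<and> rad1 p a a2 = R)"

text \<open>Outer length billiard map in phase coordinates (alpha, R) = (alpha_1, R_1):
  M = L(a1) \<inter> L(a2) is sent to L(a2) \<inter> L(a3), whose R_1 equals R_2 of M.
  Hence T(a, R) = (a2, R_2(a, a2)).\<close>
definition olb_map :: "(real \<Rightarrow> real) \<Rightarrow> real \<times> real \<Rightarrow> real \<times> real" where
  "olb_map p z = (let a = fst z; a2 = second_angle p a (snd z) in (a2, rad2 p a a2))"

end

theory Submission
  imports Defs
begin

lemma oval_basic:
  assumes "is_oval_support p"
  shows "\<And>x. (p has_real_derivative deriv p x) (at x)"
    and "\<And>x. (deriv p has_real_derivative deriv (deriv p) x) (at x)"
    and "\<And>x. p x + deriv (deriv p) x > 0"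
proof -
  fix x
  have d0: "((deriv ^^ 0) p) differentiable (at x)" and d1: "((deriv ^^ 1) p) differentiable (at x)"
    using assms unfolding is_oval_support_def by blast+
  show "(p has_real_derivative deriv p x) (at x)" using d0 by (simp add: DERIV_deriv_iff_real_differentiable)
  show "(deriv p has_real_derivative deriv (deriv p) x) (at x)" using d1 by (simp add: DERIV_deriv_iff_real_differentiable)
  show "p x + deriv (deriv p) x > 0" using assms unfolding is_oval_support_def by blast
qed

lemma pos_lemma:
  fixes F F1 F2 :: "real \<Rightarrow> real" and w :: real
  assumes "0 < w" "w \<le> pi"
    and dF: "\<And>s. (F has_real_derivative F1 s) (at s)"
    and dF1: "\<And>s. (F1 has_real_derivative F2 s) (at s)"
    and F0: "F 0 = 0" and F10: "F1 0 = 0"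
    and pos: "\<And>s. F2 s + F s > 0"
  shows "F w > 0"
proof -
  define W where "W s = F1 s * sin (w - s) + F s * cos (w - s)" for s
  have dW: "(W has_real_derivative (F2 s + F s) * sin (w - s)) (at s)" for s
    unfolding W_def
    by (rule derivative_eq_intros dF dF1 refl | simp)+ (simp add: algebra_simps)
  have "W 0 < W w"
  proof (rule DERIV_pos_imp_increasing_open[OF assms(1)])
    fix s assume s: "0 < s" "s < w"
    then have "0 < w - s" "w - s < pi" using assms by auto
    then have "sin (w - s) > 0" by (simp add: sin_gt_zero)
    then show "\<exists>y. (W has_real_derivative y) (at s) \<and> 0 < y" using dW pos by (meson mult_pos_pos)
  next
    show "continuous_on {0..w} W" using dW by (meson DERIV_atLeastAtMost_imp_continuous_on)
  qed
  then show ?thesis unfolding W_def using F0 F10 by simp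
qed

definition N1 :: "(real \<Rightarrow> real) \<Rightarrow> real \<Rightarrow> real \<Rightarrow> real" where
  "N1 p x y = p y - p x * cos (y - x) - deriv p x * sin (y - x)"
definition N2 :: "(real \<Rightarrow> real) \<Rightarrow> real \<Rightarrow> real \<Rightarrow> real" where
  "N2 p x y = p x - p y * cos (y - x) + deriv p y * sin (y - x)"

lemma N1_pos:
  assumes "is_oval_support p" "x < y" "y \<le> x + pi"
  shows "N1 p x y > 0"
proof -
  note ob = oval_basic[OF assms(1)]
  define F where "F s = p (x + s) - p x * cos s - deriv p x * sin s" for s
  define F1 where "F1 s = deriv p (x + s) + p x * sin s - deriv p x * cos s" for s
  define F2 where "F2 s = deriv (deriv p) (x + s) + p x * cos s + deriv p x * sin s" for s
  have "F (y - x) > 0"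
  proof (rule pos_lemma[where F=F and w="y-x" and ?F1.0=F1 and ?F2.0=F2])
    show "(F has_real_derivative F1 s) (at s)" for s unfolding F_def F1_def
      by (rule derivative_eq_intros ob(1)[THEN DERIV_chain2] refl | simp)+
    show "(F1 has_real_derivative F2 s) (at s)" for s unfolding F2_def F1_def
      by (rule derivative_eq_intros ob(2)[THEN DERIV_chain2] refl | simp)+
    show "F2 s + F s > 0" for s using ob(3)[of "x+s"] unfolding F_def F2_def by simp
  qed (use assms F_def F1_def in auto)
  then show ?thesis unfolding F_def N1_def by simp
qed

lemma N2_pos:
  assumes "is_oval_support p" "x < y" "y \<le> x + pi"
  shows "N2 p x y > 0"
proof -
  note ob = oval_basic[OF assms(1)]
  define F where "F s = p (y - s) - p y * cos s + deriv p y * sin s" for s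
  define F1 where "F1 s = - deriv p (y - s) + p y * sin s + deriv p y * cos s" for s
  define F2 where "F2 s = deriv (deriv p) (y - s) + p y * cos s - deriv p y * sin s" for s
  have "F (y - x) > 0"
  proof (rule pos_lemma[where F=F and w="y-x" and ?F1.0=F1 and ?F2.0=F2])
    show "(F has_real_derivative F1 s) (at s)" for s unfolding F_def F1_def
      by (rule derivative_eq_intros ob(1)[THEN DERIV_chain2] refl | simp)+
    show "(F1 has_real_derivative F2 s) (at s)" for s unfolding F2_def F1_def
      by (rule derivative_eq_intros ob(2)[THEN DERIV_chain2] refl | simp)+
    show "F2 s + F s > 0" for s using ob(3)[of "y-s"] unfolding F_def F2_def by simp
  qed (use assms F_def F1_def in auto)
  then show ?thesis unfolding F_def N2_def by simp
qed


lemma extpt_eq: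
  assumes "sin (y - x) \<noteq> 0"
  shows "extpt p x y = ((p x * sin y - p y * sin x) / sin (y - x), (p y * cos x - p x * cos y) / sin (y - x))"
proof -
  have sd: "sin (y - x) = sin y * cos x - cos y * sin x" by (simp add: sin_diff)
  show ?thesis unfolding extpt_def
  proof (rule the_equality)
    show "((p x * sin y - p y * sin x) / sin (y - x), (p y * cos x - p x * cos y) / sin (y - x)) \<in> tline p x \<and>
          ((p x * sin y - p y * sin x) / sin (y - x), (p y * cos x - p x * cos y) / sin (y - x)) \<in> tline p y"
      unfolding tline_def using assms by (auto simp: field_simps sd)
  next
    fix M assume M: "M \<in> tline p x \<and> M \<in> tline p y"
    obtain u v where uv: "M = (u, v)" by fastforce
    have e1: "u * cos x + v * sin x = p x" and e2: "u * cos y + v * sin y = p y" using M uv unfolding tline_def by auto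
    have "u * sin (y - x) = p x * sin y - p y * sin x" unfolding sd
      by (simp add: e1[symmetric] e2[symmetric] algebra_simps)
    moreover have "v * sin (y - x) = p y * cos x - p x * cos y" unfolding sd
      by (simp add: e1[symmetric] e2[symmetric] algebra_simps)
    ultimately show "M = ((p x * sin y - p y * sin x) / sin (y - x), (p y * cos x - p x * cos y) / sin (y - x))"
      using uv assms by (simp add: field_simps)
  qed
qed


lemma mult_2_div_2: "2 * ((a::real) / 2) = a" by simp

lemma rad_formulas:
  assumes "is_oval_support p" "x < y" "y < x + pi"
  shows "rad1 p x y = N1 p x y / (1 + cos (y - x))"
    and "rad2 p x y = N2 p x y / (1 + cos (y - x))"
proof -
  have s: "sin (y - x) > 0" using assms by (simp add: sin_gt_zero)
  have th: "tan ((y - x) / 2) = sin (y - x) / (1 + cos (y - x))"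
    using tan_half[of "(y-x)/2"] by (simp only: mult_2_div_2 add.commute)
  define w where "w = y - x"
  then have w: "y = x + w" and wx: "y - x = w" by simp_all
  have sy: "sin y = sin x * cos w + cos x * sin w" and cy: "cos y = cos x * cos w - sin x * sin w"
    using w by (simp_all add: sin_add cos_add)
  have sx: "sin x = sin y * cos w - cos y * sin w" and cx: "cos x = cos y * cos w + sin y * sin w"
  proof -
    have xw: "x = y - w" by (simp add: w_def)
    show "sin x = sin y * cos w - cos y * sin w" by (subst xw, simp add: sin_diff)
    show "cos x = cos y * cos w + sin y * sin w" by (subst xw, simp add: cos_diff)
  qed
  have sw: "sin w > 0" using s w by simp
  have ex: "extpt p x y = ((p x * sin y - p y * sin x) / sin (y - x), (p y * cos x - p x * cos y) / sin (y - x))"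
    using extpt_eq s by simp
  have d1: "dist (extpt p x y) (gam p x) = N1 p x y / sin (y - x)"
  proof -
    have f1: "(p x * sin y - p y * sin x) - (p x * cos x - deriv p x * sin x) * sin w = - N1 p x y * sin x"
      unfolding N1_def wx by (simp add: sy algebra_simps)
    have f2: "(p y * cos x - p x * cos y) - (p x * sin x + deriv p x * cos x) * sin w = N1 p x y * cos x"
      unfolding N1_def wx by (simp add: cy algebra_simps)
    have e1: "(p x * sin y - p y * sin x) / sin (y - x) - (p x * cos x - deriv p x * sin x) = - (N1 p x y / sin (y - x)) * sin x"
      using sw f1 unfolding wx by (simp add: divide_simps; simp add: algebra_simps)
    have e2: "(p y * cos x - p x * cos y) / sin (y - x) - (p x * sin x + deriv p x * cos x) = (N1 p x y / sin (y - x)) * cos x"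
      using sw f2 unfolding wx by (simp add: divide_simps; simp add: algebra_simps)
    have sq: "((N1 p x y / sin (y - x)) * sin x)^2 + ((N1 p x y / sin (y - x)) * cos x)^2 = (N1 p x y / sin (y - x))^2"
      by (metis (no_types) sin_cos_squared_add distrib_left mult_1_right power_mult_distrib)
    have "dist (extpt p x y) (gam p x) = sqrt (((N1 p x y / sin (y - x)) * sin x)^2 + ((N1 p x y / sin (y - x)) * cos x)^2)"
      unfolding ex gam_def dist_Pair_Pair dist_real_def e1 e2 power2_abs by (simp only: fst_conv snd_conv power2_minus mult_minus_left)
    also have "\<dots> = N1 p x y / sin (y - x)" unfolding sq using N1_pos[OF assms(1,2)] assms s by simp
    finally show ?thesis .
  qed
  have d2: "dist (extpt p x y) (gam p y) = N2 p x y / sin (y - x)"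
  proof -
    have f1: "(p x * sin y - p y * sin x) - (p y * cos y - deriv p y * sin y) * sin w = N2 p x y * sin y"
      unfolding N2_def wx by (simp add: sx algebra_simps)
    have f2: "(p y * cos x - p x * cos y) - (p y * sin y + deriv p y * cos y) * sin w = - N2 p x y * cos y"
      unfolding N2_def wx by (simp add: cx algebra_simps)
    have e1: "(p x * sin y - p y * sin x) / sin (y - x) - (p y * cos y - deriv p y * sin y) = (N2 p x y / sin (y - x)) * sin y"
      using sw f1 unfolding wx by (simp add: divide_simps; simp add: algebra_simps)
    have e2: "(p y * cos x - p x * cos y) / sin (y - x) - (p y * sin y + deriv p y * cos y) = - (N2 p x y / sin (y - x)) * cos y"
      using sw f2 unfolding wx by (simp add: divide_simps; simp add: algebra_simps)
    have sq: "((N2 p x y / sin (y - x)) * sin y)^2 + ((N2 p x y / sin (y - x)) * cos y)^2 = (N2 p x y / sin (y - x))^2"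
      by (metis (no_types) sin_cos_squared_add distrib_left mult_1_right power_mult_distrib)
    have "dist (extpt p x y) (gam p y) = sqrt (((N2 p x y / sin (y - x)) * sin y)^2 + ((N2 p x y / sin (y - x)) * cos y)^2)"
      unfolding ex gam_def dist_Pair_Pair dist_real_def e1 e2 power2_abs by (simp only: fst_conv snd_conv power2_minus mult_minus_left)
    also have "\<dots> = N2 p x y / sin (y - x)" unfolding sq using N2_pos[OF assms(1,2)] assms s by simp
    finally show ?thesis .
  qed
  show "rad1 p x y = N1 p x y / (1 + cos (y - x))" unfolding rad1_def d1 th using s by simp
  show "rad2 p x y = N2 p x y / (1 + cos (y - x))" unfolding rad2_def d2 th using s by simp
qed


definition E1 :: "(real \<Rightarrow> real) \<Rightarrow> real \<Rightarrow> real \<Rightarrow> real" where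
  "E1 p x y = N1 p x y / (1 + cos (y - x))"
definition E2 :: "(real \<Rightarrow> real) \<Rightarrow> real \<Rightarrow> real \<Rightarrow> real" where
  "E2 p x y = N2 p x y / (1 + cos (y - x))"
definition A1 :: "(real \<Rightarrow> real) \<Rightarrow> real \<Rightarrow> real \<Rightarrow> real" where
  "A1 p x y = (- (p x + deriv (deriv p) x) * sin (y - x) * (1 + cos (y - x)) - N1 p x y * sin (y - x)) / (1 + cos (y - x))^2"
definition B1 :: "(real \<Rightarrow> real) \<Rightarrow> real \<Rightarrow> real \<Rightarrow> real" where
  "B1 p x y = ((deriv p y + p x * sin (y - x) - deriv p x * cos (y - x)) * (1 + cos (y - x)) + N1 p x y * sin (y - x)) / (1 + cos (y - x))^2"
definition C2 :: "(real \<Rightarrow> real) \<Rightarrow> real \<Rightarrow> real \<Rightarrow> real" where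
  "C2 p x y = ((p y + deriv (deriv p) y) * sin (y - x) * (1 + cos (y - x)) + N2 p x y * sin (y - x)) / (1 + cos (y - x))^2"

lemma E1_fderiv:
  assumes "is_oval_support p" "1 + cos (y - x) \<noteq> 0"
  shows "((\<lambda>z. E1 p (fst z) (snd z)) has_derivative (\<lambda>h. fst h * A1 p x y + snd h * B1 p x y)) (at (x, y))"
proof -
  note ob = oval_basic[OF assms(1)]
  define c where "c = cos (y - x)"
  define s where "s = sin (y - x)"
  have D: "1 + c \<noteq> 0" using assms(2) c_def by simp
  show ?thesis
    unfolding E1_def N1_def
    apply (rule has_derivative_eq_rhs)
     apply (rule derivative_eq_intros ob(1)[THEN DERIV_compose_FDERIV] ob(2)[THEN DERIV_compose_FDERIV]
        DERIV_cos[THEN DERIV_compose_FDERIV] DERIV_sin[THEN DERIV_compose_FDERIV] | simp add: assms)+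
    apply (rule ext)
    apply (simp only: A1_def B1_def N1_def fst_conv snd_conv c_def[symmetric] s_def[symmetric])
    using D apply (simp add: inverse_eq_divide add_divide_distrib diff_divide_distrib)
    using D apply (simp add: divide_simps)
    apply (simp add: algebra_simps eval_nat_numeral)
    done
qed


lemma E2_deriv:
  assumes "is_oval_support p" "1 + cos (y - x) \<noteq> 0"
  shows "(E2 p x has_real_derivative C2 p x y) (at y)"
proof -
  note ob = oval_basic[OF assms(1)]
  define c where "c = cos (y - x)"
  define s where "s = sin (y - x)"
  have D: "1 + c \<noteq> 0" using assms(2) c_def by simp
  show ?thesis
    unfolding E2_def N2_def
    apply (rule derivative_eq_intros ob(1)[THEN DERIV_chain2] ob(2)[THEN DERIV_chain2] refl | simp add: assms)+
    apply (simp only: C2_def N2_def c_def[symmetric] s_def[symmetric])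
    using D apply (simp add: inverse_eq_divide add_divide_distrib diff_divide_distrib)
    using D apply (simp add: divide_simps)
    apply (simp add: algebra_simps eval_nat_numeral)
    done
qed

lemma E1_deriv:
  assumes "is_oval_support p" "1 + cos (y - x) \<noteq> 0"
  shows "(E1 p x has_real_derivative B1 p x y) (at y)"
proof -
  have "((\<lambda>t. E1 p (fst (x, t)) (snd (x, t))) has_derivative (\<lambda>k. fst (0, k) * A1 p x y + snd (0::real, k) * B1 p x y)) (at y)"
    by (rule has_derivative_compose[where f = "\<lambda>t. (x, t)", OF _ E1_fderiv[OF assms]])
       (rule derivative_eq_intros | simp)+
  then show ?thesis by (simp add: has_field_derivative_def mult.commute[of _ "B1 p x y"])
qed

lemma B1_pos:
  assumes "is_oval_support p" "x < y" "y < x + pi"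
  shows "B1 p x y > 0"
proof -
  define c where "c = cos (y - x)"
  define s where "s = sin (y - x)"
  have s: "s > 0" using assms by (simp add: sin_gt_zero s_def)
  have c: "1 + c > 0" unfolding c_def using assms cos_gt_neg1[of "y - x"] by simp
  have pyth: "s^2 + c^2 = 1" unfolding s_def c_def by simp
  have n1: "N1 p x y > 0" "N2 p x y > 0" using N1_pos N2_pos assms by auto
  have id: "s * ((deriv p y + p x * s - deriv p x * c) * (1 + c) + N1 p x y * s) = (N2 p x y + N1 p x y) * (1 + c)"
  proof -
    have "s * ((deriv p y + p x * s - deriv p x * c) * (1 + c) + N1 p x y * s) - (N2 p x y + N1 p x y) * (1 + c)
        = (s^2 + c^2 - 1) * (p x + p y - deriv p x * s)"
      unfolding N1_def N2_def c_def[symmetric] s_def[symmetric] by (simp add: algebra_simps power2_eq_square)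
    then show ?thesis using pyth by simp
  qed
  have "(deriv p y + p x * s - deriv p x * c) * (1 + c) + N1 p x y * s > 0"
  proof -
    have "s * ((deriv p y + p x * s - deriv p x * c) * (1 + c) + N1 p x y * s) > 0"
      unfolding id using n1 c by simp
    then show ?thesis using s by (simp add: zero_less_mult_iff)
  qed
  then show ?thesis unfolding B1_def c_def[symmetric] s_def[symmetric] using c by simp
qed

lemma A1_neg:
  assumes "is_oval_support p" "x < y" "y < x + pi"
  shows "A1 p x y < 0"
proof -
  define c where "c = cos (y - x)"
  define s where "s = sin (y - x)"
  have s: "s > 0" using assms by (simp add: sin_gt_zero s_def)
  have c: "1 + c > 0" unfolding c_def using assms cos_gt_neg1[of "y - x"] by simp
  have n1: "N1 p x y > 0" using N1_pos assms by auto
  have r: "p x + deriv (deriv p) x > 0" using oval_basic(3)[OF assms(1)] by simp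
  have "- (p x + deriv (deriv p) x) * s * (1 + c) - N1 p x y * s = - (s * ((p x + deriv (deriv p) x) * (1 + c) + N1 p x y))"
    by (simp add: algebra_simps)
  also have "\<dots> < 0" using s c n1 r by (simp add: add_pos_pos)
  finally show ?thesis unfolding A1_def c_def[symmetric] s_def[symmetric] using c by (simp add: divide_neg_pos)
qed

lemma C2_pos:
  assumes "is_oval_support p" "x < y" "y < x + pi"
  shows "C2 p x y > 0"
proof -
  define c where "c = cos (y - x)"
  define s where "s = sin (y - x)"
  have s: "s > 0" using assms by (simp add: sin_gt_zero s_def)
  have c: "1 + c > 0" unfolding c_def using assms cos_gt_neg1[of "y - x"] by simp
  have n1: "N2 p x y > 0" using N2_pos assms by auto
  have r: "p y + deriv (deriv p) y > 0" using oval_basic(3)[OF assms(1)] by simp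
  have "(p y + deriv (deriv p) y) * s * (1 + c) + N2 p x y * s > 0"
    using s c n1 r by (simp add: add_pos_pos)
  then show ?thesis unfolding C2_def c_def[symmetric] s_def[symmetric] using c by simp
qed


lemma cpos: "0 \<le> t \<Longrightarrow> t < pi \<Longrightarrow> 1 + cos t > 0"
  using cos_gt_neg1[of t] by auto

lemma E1_mono:
  assumes "is_oval_support p" "x < y1" "y1 < y2" "y2 < x + pi"
  shows "E1 p x y1 < E1 p x y2"
proof (rule DERIV_pos_imp_increasing[OF assms(3)])
  fix t assume t: "y1 \<le> t" "t \<le> y2"
  then have "1 + cos (t - x) \<noteq> 0" using cpos[of "t - x"] assms by force
  then show "\<exists>d. (E1 p x has_real_derivative d) (at t) \<and> 0 < d"
    using E1_deriv[OF assms(1)] B1_pos[OF assms(1), of x t] assms t by force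
qed

lemma rad1_E1: "is_oval_support p \<Longrightarrow> x < y \<Longrightarrow> y < x + pi \<Longrightarrow> rad1 p x y = E1 p x y"
  using rad_formulas(1) E1_def by simp

lemma rad2_E2: "is_oval_support p \<Longrightarrow> x < y \<Longrightarrow> y < x + pi \<Longrightarrow> rad2 p x y = E2 p x y"
  using rad_formulas(2) E2_def by simp

lemma sa_char:
  assumes "is_oval_support p" "x < y" "y < x + pi"
  shows "second_angle p x (E1 p x y) = y"
  unfolding second_angle_def
proof (rule the_equality)
  show "x < y \<and> y < x + pi \<and> rad1 p x y = E1 p x y" using assms rad1_E1 by simp
next
  fix z assume z: "x < z \<and> z < x + pi \<and> rad1 p x z = E1 p x y"
  then have e: "E1 p x z = E1 p x y" using rad1_E1[OF assms(1), of x z] by simp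
  show "z = y"
  proof (rule ccontr)
    assume "z \<noteq> y"
    then consider "z < y" | "y < z" by linarith
    then show False
      using E1_mono[OF assms(1)] e z assms by (cases, fastforce+)
  qed
qed

lemma sa_exists:
  assumes "is_oval_support p" "r > 0"
  shows "\<exists>y. x < y \<and> y < x + pi \<and> E1 p x y = r"
proof -
  note ob = oval_basic[OF assms(1)]
  have cp: "isCont p t" for t using DERIV_isCont[OF ob(1)] .
  have cp1: "isCont (deriv p) t" for t using DERIV_isCont[OF ob(2)] .
  have "isCont (\<lambda>t. N1 p x t) (x + pi)" unfolding N1_def
    by (intro continuous_intros cp)
  then have l1: "((\<lambda>t. N1 p x t) \<longlongrightarrow> N1 p x (x + pi)) (at_left (x + pi))"
    by (simp add: isCont_def filterlim_at_split)
  have l2: "((\<lambda>t. 1 + cos (t - x)) \<longlongrightarrow> 0) (at_left (x + pi))"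
  proof -
    have "isCont (\<lambda>t. 1 + cos (t - x)) (x + pi)" by (intro continuous_intros)
    then have "((\<lambda>t. 1 + cos (t - x)) \<longlongrightarrow> 1 + cos (x + pi - x)) (at_left (x + pi))"
      by (simp add: isCont_def filterlim_at_split)
    then show ?thesis by simp
  qed
  have ev: "eventually (\<lambda>t. t \<in> {x<..<x+pi}) (at_left (x + pi))"
    by (rule eventually_at_left_real) simp
  have l3: "eventually (\<lambda>t. 0 < 1 + cos (t - x)) (at_left (x + pi))"
    using ev by eventually_elim (use cpos in auto)
  have "LIM t at_left (x + pi). N1 p x t / (1 + cos (t - x)) :> at_top"
    by (rule LIM_at_top_divide[OF l1 N1_pos[OF assms(1)] l2 l3]) auto
  then have "eventually (\<lambda>t. N1 p x t / (1 + cos (t - x)) > r) (at_left (x + pi))"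
    by (simp add: filterlim_at_top_dense)
  with ev have "eventually (\<lambda>t. t \<in> {x<..<x+pi} \<and> N1 p x t / (1 + cos (t - x)) > r) (at_left (x + pi))"
    by eventually_elim auto
  then obtain t1 where t1: "x < t1" "t1 < x + pi" "E1 p x t1 > r"
    using eventually_happens'[OF trivial_limit_at_left_real] E1_def by force
  have "\<exists>y. x \<le> y \<and> y \<le> t1 \<and> E1 p x y = r"
  proof (rule IVT')
    show "E1 p x x \<le> r" using assms by (simp add: E1_def N1_def)
    show "r \<le> E1 p x t1" using t1 by simp
    show "x \<le> t1" using t1 by simp
    show "continuous_on {x..t1} (E1 p x)"
    proof (rule DERIV_atLeastAtMost_imp_continuous_on)
      fix t assume "x \<le> t" "t \<le> t1"
      then have "1 + cos (t - x) \<noteq> 0" using cpos[of "t - x"] t1 by force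
      then show "\<exists>d. (E1 p x has_real_derivative d) (at t)" using E1_deriv[OF assms(1)] by blast
    qed
  qed
  then obtain y where y: "x \<le> y" "y \<le> t1" "E1 p x y = r" by blast
  have "y \<noteq> x" using y assms by (auto simp: E1_def N1_def)
  then have "x < y \<and> y < x + pi \<and> E1 p x y = r" using y t1 by auto
  then show ?thesis by blast
qed

lemma sa_props:
  assumes "is_oval_support p" "r > 0"
  shows "x < second_angle p x r \<and> second_angle p x r < x + pi \<and> E1 p x (second_angle p x r) = r"
  using sa_exists[OF assms, of x] sa_char[OF assms(1)] by force


lemma core:
  fixes x0 r0 :: real
  assumes "is_oval_support p" "r0 > 0"
  defines "y0 \<equiv> second_angle p x0 r0"
  shows "((\<lambda>w. (fst w, second_angle p (fst w) (snd w))) has_derivative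
           (\<lambda>h. (fst h, (snd h - fst h * A1 p x0 y0) / B1 p x0 y0))) (at (x0, r0))"
proof -
  have y0: "x0 < y0" "y0 < x0 + pi" "E1 p x0 y0 = r0" using sa_props[OF assms(1,2)] y0_def by auto
  define S where "S = {z::real\<times>real. fst z < snd z} \<inter> {z. snd z < fst z + pi}"
  have oS: "open S" unfolding S_def
    by (intro open_Int open_Collect_less continuous_intros)
  have inS: "(x0, y0) \<in> S" using y0 S_def by simp
  define F where "F z = (fst z, E1 p (fst z) (snd z))" for z :: "real \<times> real"
  have Fd: "(F has_derivative (\<lambda>h. (fst h, fst h * A1 p (fst z) (snd z) + snd h * B1 p (fst z) (snd z)))) (at z)"
    if "z \<in> S" for z
  proof -
    obtain a b where z: "z = (a, b)" by fastforce
    have "1 + cos (b - a) \<noteq> 0" using that cpos[of "b - a"] z S_def by force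
    then have "((\<lambda>x. E1 p (fst x) (snd x)) has_derivative (\<lambda>h. fst h * A1 p a b + snd h * B1 p a b)) (at (a, b))"
      using E1_fderiv[OF assms(1)] by blast
    then show ?thesis unfolding F_def z
      by (intro has_derivative_Pair has_derivative_fst[OF has_derivative_ident]) simp_all
  qed
  have contf: "continuous_on S F"
    by (rule continuous_at_imp_continuous_on) (use Fd has_derivative_continuous in blast)
  have gf: "(\<lambda>w. (fst w, second_angle p (fst w) (snd w))) (F z) = z" if "z \<in> S" for z
    using that sa_char[OF assms(1)] unfolding F_def S_def by (cases z) auto
  have B: "B1 p x0 y0 \<noteq> 0" using B1_pos[OF assms(1) y0(1,2)] by simp
  have "((\<lambda>w. (fst w, second_angle p (fst w) (snd w))) has_derivative
           (\<lambda>h. (fst h, (snd h - fst h * A1 p x0 y0) / B1 p x0 y0))) (at (F (x0, y0)))"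
  proof (rule has_derivative_inverse_strong[OF oS inS contf gf Fd[OF inS]])
    show "(\<lambda>h. (fst h, fst h * A1 p (fst (x0, y0)) (snd (x0, y0)) + snd h * B1 p (fst (x0, y0)) (snd (x0, y0)))) \<circ>
          (\<lambda>h. (fst h, (snd h - fst h * A1 p x0 y0) / B1 p x0 y0)) = id"
      using B by (auto simp: fun_eq_iff field_simps)
  qed simp
  then show ?thesis unfolding F_def using y0 by simp
qed


lemma sa_deriv_r:
  assumes "is_oval_support p" "R > 0"
  shows "((\<lambda>r. second_angle p a r) has_real_derivative 1 / B1 p a (second_angle p a R)) (at R)"
proof -
  have "((\<lambda>r. snd ((\<lambda>w. (fst w, second_angle p (fst w) (snd w))) ((\<lambda>r. (a, r)) r))) has_derivative
      (\<lambda>k. snd ((\<lambda>h. (fst h, (snd h - fst h * A1 p a (second_angle p a R)) / B1 p a (second_angle p a R))) ((\<lambda>k. (0, k)) k)))) (at R)"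
    apply (rule has_derivative_snd)
    apply (rule has_derivative_compose[where f = "\<lambda>r. (a, r)", OF _ core[OF assms]])
    apply (rule derivative_eq_intros | simp)+
    done
  then have "(second_angle p a has_derivative (\<lambda>k. k / B1 p a (second_angle p a R))) (at R)" by simp
  moreover have "(\<lambda>k. k / B1 p a (second_angle p a R)) = (*) (1 / B1 p a (second_angle p a R))"
    by (auto simp: fun_eq_iff)
  ultimately show ?thesis by (simp add: has_field_derivative_def)
qed

lemma sa_deriv_2:
  assumes "is_oval_support p" "a < x0" "x0 < a + pi"
  shows "((\<lambda>x. second_angle p x (rad2 p a x)) has_real_derivative
     (C2 p a x0 - A1 p x0 (second_angle p x0 (rad2 p a x0))) / B1 p x0 (second_angle p x0 (rad2 p a x0))) (at x0)"
proof -
  define r0 where "r0 = rad2 p a x0"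
  have "1 + cos (x0 - a) > 0" using cpos[of "x0 - a"] assms by simp
  then have r0: "r0 > 0" unfolding r0_def using rad2_E2[OF assms] N2_pos[OF assms(1,2)] assms E2_def by simp
  have c: "1 + cos (x0 - a) \<noteq> 0" using cpos[of "x0 - a"] assms by simp
  have d2: "(rad2 p a has_real_derivative C2 p a x0) (at x0)"
  proof (rule has_field_derivative_transform_within_open[OF E2_deriv[OF assms(1) c]])
    show "open {a<..<a+pi}" by simp
    show "x0 \<in> {a<..<a+pi}" using assms by simp
    show "\<And>z. z \<in> {a<..<a+pi} \<Longrightarrow> E2 p a z = rad2 p a z" using rad2_E2[OF assms(1)] by simp
  qed
  have "((\<lambda>x. snd ((\<lambda>w. (fst w, second_angle p (fst w) (snd w))) ((\<lambda>x. (x, rad2 p a x)) x))) has_derivative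
      (\<lambda>k. snd ((\<lambda>h. (fst h, (snd h - fst h * A1 p x0 (second_angle p x0 r0)) / B1 p x0 (second_angle p x0 r0))) ((\<lambda>k. (k, k * C2 p a x0)) k)))) (at x0)"
  proof -
    have cr: "((\<lambda>w. (fst w, second_angle p (fst w) (snd w))) has_derivative
           (\<lambda>h. (fst h, (snd h - fst h * A1 p x0 (second_angle p x0 r0)) / B1 p x0 (second_angle p x0 r0)))) (at (x0, rad2 p a x0))"
      using core[OF assms(1) r0, of x0] r0_def by simp
    show ?thesis
      apply (rule has_derivative_snd)
      apply (rule has_derivative_compose[where f = "\<lambda>x. (x, rad2 p a x)", OF _ cr])
      apply (rule has_derivative_Pair[OF has_derivative_ident])
      apply (rule has_derivative_eq_rhs[OF d2[unfolded has_field_derivative_def]])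
      apply (auto simp: fun_eq_iff)
      done
  qed
  then have "((\<lambda>x. second_angle p x (rad2 p a x)) has_derivative
      (\<lambda>k. (k * C2 p a x0 - k * A1 p x0 (second_angle p x0 r0)) / B1 p x0 (second_angle p x0 r0))) (at x0)"
    by simp
  moreover have "(\<lambda>k. (k * C2 p a x0 - k * A1 p x0 (second_angle p x0 r0)) / B1 p x0 (second_angle p x0 r0))
     = (*) ((C2 p a x0 - A1 p x0 (second_angle p x0 r0)) / B1 p x0 (second_angle p x0 r0))"
    by (auto simp: fun_eq_iff field_simps)
  ultimately show ?thesis unfolding r0_def has_field_derivative_def by simp
qed


theorem mainTheorem5:
  fixes p :: "real \<Rightarrow> real"
  assumes "is_oval_support p"
    and "R > 0"
  shows "(\<exists>D>0. ((\<lambda>r. fst (olb_map p (a, r))) has_real_derivative D) (at R)) \<and>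
    (\<exists>D>0. ((\<lambda>r. fst (olb_map p (olb_map p (a, r)))) has_real_derivative D) (at R))"
proof -
  define x0 where "x0 = second_angle p a R"
  have x0: "a < x0" "x0 < a + pi" using sa_props[OF assms, of a] x0_def by auto
  have e1: "(\<lambda>r. fst (olb_map p (a, r))) = (\<lambda>r. second_angle p a r)"
    by (simp add: olb_map_def Let_def)
  have e2: "(\<lambda>r. fst (olb_map p (olb_map p (a, r)))) = (\<lambda>r. (\<lambda>x. second_angle p x (rad2 p a x)) (second_angle p a r))"
    by (simp add: olb_map_def Let_def)
  have d1: "((\<lambda>r. second_angle p a r) has_real_derivative 1 / B1 p a x0) (at R)"
    using sa_deriv_r[OF assms] x0_def by simp
  have B0: "1 / B1 p a x0 > 0" using B1_pos[OF assms(1) x0] by simp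
  define r0 where "r0 = rad2 p a x0"
  have r0: "r0 > 0"
    using rad2_E2[OF assms(1) x0] N2_pos[OF assms(1) x0(1)] x0 cpos[of "x0 - a"] r0_def E2_def by simp
  define y0 where "y0 = second_angle p x0 r0"
  have y0: "x0 < y0" "y0 < x0 + pi" using sa_props[OF assms(1) r0, of x0] y0_def by auto
  have d2: "((\<lambda>x. second_angle p x (rad2 p a x)) has_real_derivative (C2 p a x0 - A1 p x0 y0) / B1 p x0 y0) (at x0)"
    using sa_deriv_2[OF assms(1) x0] r0_def y0_def by simp
  have pos2: "(C2 p a x0 - A1 p x0 y0) / B1 p x0 y0 > 0"
    using C2_pos[OF assms(1) x0] A1_neg[OF assms(1) y0] B1_pos[OF assms(1) y0] by simp
  have d12: "((\<lambda>r. (\<lambda>x. second_angle p x (rad2 p a x)) (second_angle p a r)) has_real_derivative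
     (C2 p a x0 - A1 p x0 y0) / B1 p x0 y0 * (1 / B1 p a x0)) (at R)"
    using DERIV_chain2[OF d2[unfolded x0_def] d1[unfolded x0_def]] x0_def by simp
  show ?thesis unfolding e1 e2
    using d1 d12 B0 pos2 by (meson mult_pos_pos)
qed

end
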